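(* Let $p\geq 6$ be even, and write the vertices of $C_p\,\square\, C_3$ as $a_i,b_i,c_i$ ($i\in\{1,\dots,p\}$), where for each $i$ the vertices $a_i,b_i,c_i$ form a triangle, and for each of the letters $x\in\{a,b,c\}$ the vertices $x_1,x_2,\dots,x_p$ form a cycle in this cyclic order (indices modulo $p$). Then there exists a perfect matching of $C_p\,\square\, C_3$ containing the nine edges $a_1a_2,\ b_1b_2,\ c_1c_2,\ a_3c_3,\ b_3b_4,\ a_4a_5,\ c_4c_5,\ b_5b_6,\ a_6c_6$, and no perfect matching containing these nine edges can be extended to a Hamiltonian cycle. In particular, $C_p\,\square\, C_3$ does not have the PMH--property.
   Context: $C_n$ denotes the cycle on $n$ vertices. The Cartesian product $G\,\square\, H$ of graphs $G$ and $H$ has vertex set $V(G)\times V(H)$, where $(u,v)$ and $(u',v')$ are adjacent if and only if either $u=u'$ and $vv'\in E(H)$, or $uu'\in E(G)$ and $v=v'$. A perfect matching $M$ of a graph $G$ can be extended to a Hamiltonian cycle if there exists a perfect matching $N$ of $G$ such that $M\cup N$ is (the edge set of) a Hamiltonian cycle of $G$. A graph has the PMH--property if it admits at least one perfect matching and every perfect matching of it can be extended to a Hamiltonian cycle. *)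

theory Defs
  imports Main
begin

definition cycle_graph_V :: "nat \<Rightarrow> nat set" where
  "cycle_graph_V n = {0..<n}"

definition cycle_graph_E :: "nat \<Rightarrow> nat set set" where
  "cycle_graph_E n = {{i, (i + 1) mod n} | i. i < n}"

definition cart_V :: "'a set \<Rightarrow> 'b set \<Rightarrow> ('a \<times> 'b) set" where
  "cart_V V1 V2 = V1 \<times> V2"

definition cart_E :: "'a set \<Rightarrow> 'a set set \<Rightarrow> 'b set \<Rightarrow> 'b set set \<Rightarrow> ('a \<times> 'b) set set" where
  "cart_E V1 E1 V2 E2 =
     {{(u, v), (u', v')} | u v u' v'.
        u \<in> V1 \<and> u' \<in> V1 \<and> v \<in> V2 \<and> v' \<in> V2 \<and>
        ((u = u' \<and> {v, v'} \<in> E2) \<or> ({u, u'} \<in> E1 \<and> v = v'))}"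

definition perfect_matching :: "'a set \<Rightarrow> 'a set set \<Rightarrow> 'a set set \<Rightarrow> bool" where
  "perfect_matching V E M \<longleftrightarrow> M \<subseteq> E \<and> (\<forall>v\<in>V. \<exists>!e. e \<in> M \<and> v \<in> e)"

definition hamiltonian_cycle :: "'a set \<Rightarrow> 'a set set \<Rightarrow> 'a set set \<Rightarrow> bool" where
  "hamiltonian_cycle V E H \<longleftrightarrow> H \<subseteq> E \<and>
     (\<exists>vs. distinct vs \<and> set vs = V \<and> length vs \<ge> 3 \<and>
        H = {{vs ! k, vs ! ((k + 1) mod length vs)} | k. k < length vs})"

definition extends_to_ham :: "'a set \<Rightarrow> 'a set set \<Rightarrow> 'a set set \<Rightarrow> bool" where
  "extends_to_ham V E M \<longleftrightarrow>
     (\<exists>N. perfect_matching V E N \<and> hamiltonian_cycle V E (M \<union> N))"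

definition PMH_property :: "'a set \<Rightarrow> 'a set set \<Rightarrow> bool" where
  "PMH_property V E \<longleftrightarrow> (\<exists>M. perfect_matching V E M) \<and>
     (\<forall>M. perfect_matching V E M \<longrightarrow> extends_to_ham V E M)"

text \<open>The prism-like graph C_p square C_3, vertices (i, j) with i < p, j < 3.
  Letter a, b, c corresponds to j = 0, 1, 2; the paper's index i (1..p) is i - 1.\<close>
definition CpC3_V :: "nat \<Rightarrow> (nat \<times> nat) set" where
  "CpC3_V p = cart_V (cycle_graph_V p) (cycle_graph_V 3)"

definition CpC3_E :: "nat \<Rightarrow> (nat \<times> nat) set set" where
  "CpC3_E p = cart_E (cycle_graph_V p) (cycle_graph_E p) (cycle_graph_V 3) (cycle_graph_E 3)"

definition va :: "nat \<Rightarrow> nat \<times> nat" where "va i = (i - 1, 0)"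
definition vb :: "nat \<Rightarrow> nat \<times> nat" where "vb i = (i - 1, 1)"
definition vc :: "nat \<Rightarrow> nat \<times> nat" where "vc i = (i - 1, 2)"

definition nine_edges :: "(nat \<times> nat) set set" where
  "nine_edges = {{va 1, va 2}, {vb 1, vb 2}, {vc 1, vc 2}, {va 3, vc 3}, {vb 3, vb 4},
                 {va 4, va 5}, {vc 4, vc 5}, {vb 5, vb 6}, {va 6, vc 6}}"

end

theory Submission
  imports Defs
begin

lemma V_iff[simp]: "x \<in> CpC3_V p \<longleftrightarrow> fst x < p \<and> snd x < 3"
  by (cases x) (auto simp: CpC3_V_def cart_V_def cycle_graph_V_def)

lemma card_V: "card (CpC3_V p) = 3 * p"
proof -
  have "CpC3_V p = {0..<p} \<times> {0..<3}" by (auto simp: CpC3_V_def cart_V_def cycle_graph_V_def)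
  thus ?thesis by (simp add: card_cartesian_product)
qed

lemma cyc_ne: assumes "{a,b} \<in> cycle_graph_E n" "n \<ge> 3" shows "a \<noteq> b"
proof
  assume "a = b"
  from assms(1) obtain k where k: "k < n" "{a,b} = {k, (k+1) mod n}" by (auto simp: cycle_graph_E_def)
  hence "k = (k+1) mod n" using \<open>a = b\<close> by (auto simp: doubleton_eq_iff)
  show False
  proof (cases "k + 1 < n")
    case True thus False using \<open>k = (k+1) mod n\<close> by simp
  next
    case False
    hence "k + 1 = n" using k(1) by simp
    hence "(k+1) mod n = 0" by simp
    thus False using \<open>k = (k+1) mod n\<close> \<open>k + 1 = n\<close> assms(2) by simp
  qed
qed

lemma cyc_nb: assumes "{a,b} \<in> cycle_graph_E n" "a < n" "b < n"
  shows "b = (a+1) mod n \<or> a = (b+1) mod n"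
  using assms by (auto simp: cycle_graph_E_def doubleton_eq_iff)

lemma E_form:
  assumes "e \<in> CpC3_E p"
  obtains u v u' v' where "e = {(u,v),(u',v')}" "u < p" "u' < p" "v < 3" "v' < 3"
    "(u = u' \<and> {v, v'} \<in> cycle_graph_E 3) \<or> ({u, u'} \<in> cycle_graph_E p \<and> v = v')"
  using assms by (auto simp: CpC3_E_def cart_E_def cycle_graph_V_def)

lemma E_edge:
  assumes "e \<in> CpC3_E p" "p \<ge> 3"
  shows "\<exists>a b. e = {a,b} \<and> a \<in> CpC3_V p \<and> b \<in> CpC3_V p \<and> a \<noteq> b"
proof -
  obtain u v u' v' where h: "e = {(u,v),(u',v')}" "u < p" "u' < p" "v < 3" "v' < 3"
    "(u = u' \<and> {v, v'} \<in> cycle_graph_E 3) \<or> ({u, u'} \<in> cycle_graph_E p \<and> v = v')"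
    using E_form[OF assms(1)] by blast
  have "(u,v) \<noteq> (u',v')" using h(6) cyc_ne assms(2) by fastforce
  thus ?thesis using h by auto
qed

lemma sym_step:
  assumes "{a,b} \<in> cycle_graph_E n" "1 \<le> a" "a < n" "b < n"
  shows "b = (a+1) mod n \<or> b = a - 1"
proof -
  have "b = (a+1) mod n \<or> a = (b+1) mod n" using cyc_nb assms by blast
  moreover have "a = (b+1) mod n \<Longrightarrow> b = a - 1"
    using assms by (metis Suc_eq_plus1 Suc_lessI diff_Suc_1 mod_less mod_self not_one_le_zero)
  ultimately show ?thesis by blast
qed

lemma E_nb:
  assumes "{(i,j), y} \<in> CpC3_E p" "1 \<le> i" "i < p" "j < 3"
  shows "y = (i-1,j) \<or> y = ((i+1) mod p, j) \<or> y = (i, (j+1) mod 3) \<or> y = (i, (j+2) mod 3)"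
proof -
  obtain u v u' v' where h: "{(i,j), y} = {(u,v),(u',v')}" "u < p" "u' < p" "v < 3" "v' < 3"
    "(u = u' \<and> {v, v'} \<in> cycle_graph_E 3) \<or> ({u, u'} \<in> cycle_graph_E p \<and> v = v')"
    using E_form[OF assms(1)] by blast
  have sw: "{a,b} = {b,a}" for a b :: nat by auto
  have "((i,j) = (u,v) \<and> y = (u',v')) \<or> ((i,j) = (u',v') \<and> y = (u,v))"
    using h(1) by (auto simp: doubleton_eq_iff)
  then have "\<exists>w z. y = (w,z) \<and> w < p \<and> z < 3 \<and>
    ((i = w \<and> {j, z} \<in> cycle_graph_E 3) \<or> ({i, w} \<in> cycle_graph_E p \<and> j = z))"
  proof
    assume "(i,j) = (u,v) \<and> y = (u',v')" thus ?thesis using h by auto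
  next
    assume "(i,j) = (u',v') \<and> y = (u,v)" thus ?thesis using h by (auto simp: insert_commute)
  qed
  then obtain w z where wz: "y = (w,z)" "w < p" "z < 3"
    "(i = w \<and> {j, z} \<in> cycle_graph_E 3) \<or> ({i, w} \<in> cycle_graph_E p \<and> j = z)"
    by blast
  show ?thesis
  proof (cases "i = w \<and> {j, z} \<in> cycle_graph_E 3")
    case True
    have "z = (j+1) mod 3 \<or> j = (z+1) mod 3" using cyc_nb True assms(4) wz(3) by blast
    moreover have "j \<in> {0,1,2}" "z \<in> {0,1,2}" using assms(4) wz(3) by auto
    ultimately have "z = (j+1) mod 3 \<or> z = (j+2) mod 3" by auto
    thus ?thesis using True wz(1) by auto
  next
    case False
    hence "{i, w} \<in> cycle_graph_E p" "j = z" using wz(4) by auto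
    thus ?thesis using sym_step[of i w p] assms wz by auto
  qed
qed



definition partner :: "'a set set \<Rightarrow> 'a \<Rightarrow> 'a" where
  "partner M x = (SOME y. {x,y} \<in> M)"

lemma partner_props:
  assumes pm: "perfect_matching (CpC3_V p) (CpC3_E p) M" and p: "p \<ge> 3" and x: "x \<in> CpC3_V p"
  shows "{x, partner M x} \<in> M" "\<And>e. e \<in> M \<Longrightarrow> x \<in> e \<Longrightarrow> e = {x, partner M x}"
    "partner M x \<noteq> x" "partner M x \<in> CpC3_V p"
proof -
  from pm x obtain e where e: "e \<in> M" "x \<in> e" and uq: "\<And>e'. e' \<in> M \<Longrightarrow> x \<in> e' \<Longrightarrow> e' = e"
    unfolding perfect_matching_def by blast
  have "e \<in> CpC3_E p" using e pm by (auto simp: perfect_matching_def)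
  then obtain a b where ab: "e = {a,b}" "a \<in> CpC3_V p" "b \<in> CpC3_V p" "a \<noteq> b"
    using E_edge p by blast
  have "\<exists>y. e = {x,y} \<and> y \<noteq> x \<and> y \<in> CpC3_V p"
  proof (cases "x = a")
    case True thus ?thesis using ab by blast
  next
    case False hence "x = b" using ab e(2) by auto
    thus ?thesis using ab by (metis insert_commute)
  qed
  then obtain y where y: "e = {x,y}" "y \<noteq> x" "y \<in> CpC3_V p" by blast
  have "{x, partner M x} \<in> M" unfolding partner_def by (rule someI[of _ y]) (use y e in auto)
  moreover hence "{x, partner M x} = e" using uq by auto
  hence py: "partner M x = y" using y by (auto simp: doubleton_eq_iff)
  ultimately show "{x, partner M x} \<in> M" by simp
  show "\<And>e'. e' \<in> M \<Longrightarrow> x \<in> e' \<Longrightarrow> e' = {x, partner M x}" using uq py y by auto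
  show "partner M x \<noteq> x" "partner M x \<in> CpC3_V p" using py y by auto
qed

lemma partner_inv:
  assumes pm: "perfect_matching (CpC3_V p) (CpC3_E p) M" and p: "p \<ge> 3" and x: "x \<in> CpC3_V p"
  shows "partner M (partner M x) = x"
proof -
  let ?y = "partner M x"
  have y: "?y \<in> CpC3_V p" "{x,?y} \<in> M" "?y \<noteq> x"
    using partner_props(4)[OF pm p x] partner_props(1)[OF pm p x] partner_props(3)[OF pm p x] by blast+
  have "{x,?y} = {?y, partner M ?y}" using partner_props(2)[OF pm p y(1) y(2)] by simp
  hence "x \<in> {?y, partner M ?y}" by (metis insertI1)
  hence "x = ?y \<or> x = partner M ?y" by (metis insertE singletonD)
  thus ?thesis using y(3) by metis
qed

lemma partner_eq:
  assumes pm: "perfect_matching (CpC3_V p) (CpC3_E p) M" and p: "p \<ge> 3" and x: "x \<in> CpC3_V p"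
    and "{x,y} \<in> M"
  shows "partner M x = y"
proof -
  have "{x,y} = {x, partner M x}" using partner_props(2)[OF pm p x assms(4)] by simp
  moreover have "partner M x \<noteq> x" using partner_props[OF pm p x] by auto
  ultimately show ?thesis by (auto simp: doubleton_eq_iff)
qed

lemma ham_closed:
  assumes H: "hamiltonian_cycle V E H" and S: "S \<subseteq> V" "x0 \<in> S" "y0 \<in> V" "y0 \<notin> S"
    and cl: "\<And>x e. x \<in> S \<Longrightarrow> e \<in> H \<Longrightarrow> x \<in> e \<Longrightarrow> e \<subseteq> S"
  shows False
proof -
  from H obtain vs where vs: "distinct vs" "set vs = V" "length vs \<ge> 3"
    "H = {{vs ! k, vs ! ((k + 1) mod length vs)} | k. k < length vs}"
    unfolding hamiltonian_cycle_def by blast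
  let ?n = "length vs"
  obtain k where k: "k < ?n" "vs ! k = x0" using S vs(2) by (metis in_set_conv_nth subsetD)
  have all: "vs ! ((k + j) mod ?n) \<in> S" for j
  proof (induction j)
    case 0 thus ?case using k S(2) by simp
  next
    case (Suc j)
    let ?m = "(k + j) mod ?n"
    have n0: "0 < ?n" using vs(3) by linarith
    have "?m < ?n" using n0 by (rule mod_less_divisor)
    hence "{vs ! ?m, vs ! ((?m + 1) mod ?n)} \<in> H" using vs(4) by blast
    hence "{vs ! ?m, vs ! ((?m + 1) mod ?n)} \<subseteq> S" using cl Suc by blast
    moreover have "(?m + 1) mod ?n = (k + Suc j) mod ?n" by (simp add: mod_Suc_eq)
    ultimately show ?case by simp
  qed
  obtain l where l: "l < ?n" "vs ! l = y0" using S vs(2) by (metis in_set_conv_nth)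
  have "(k + (l + ?n - k)) mod ?n = l" using k(1) l(1) by simp
  hence "y0 \<in> S" using all[of "l + ?n - k"] l by simp
  thus False using S by simp
qed



lemma hor_E: "i + 1 < p \<Longrightarrow> j < 3 \<Longrightarrow> {(i,j),(i+1,j)} \<in> CpC3_E p"
  unfolding CpC3_E_def cart_E_def cycle_graph_E_def cycle_graph_V_def
  by (rule CollectI, rule exI[of _ i], rule exI[of _ j], rule exI[of _ "i+1"], rule exI[of _ j]) auto

lemma hor2_E: "i + 1 < p \<Longrightarrow> j < 3 \<Longrightarrow> k = i + 1 \<Longrightarrow> {(i,j),(k,j)} \<in> CpC3_E p"
  using hor_E by simp

lemma hor3_E: "k + 1 < p \<Longrightarrow> j < 3 \<Longrightarrow> i = k + 1 \<Longrightarrow> {(i,j),(k,j)} \<in> CpC3_E p"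
  using hor_E by (simp add: insert_commute)

lemma ver_E: "i < p \<Longrightarrow> j < 3 \<Longrightarrow> {(i,j),(i,(j+1) mod 3)} \<in> CpC3_E p"
  unfolding CpC3_E_def cart_E_def cycle_graph_E_def cycle_graph_V_def
  by (rule CollectI, rule exI[of _ i], rule exI[of _ j], rule exI[of _ i], rule exI[of _ "(j+1) mod 3"]) auto

definition pm :: "nat \<times> nat \<Rightarrow> nat \<times> nat" where
  "pm x = (case x of (i,j) \<Rightarrow> if i \<ge> 6 then (if even i then (i+1,j) else (i-1,j)) else
     if i = 0 then (1,j) else if i = 1 then (0,j) else
     if i = 2 \<and> j = 0 then (2,2) else if i = 2 \<and> j = 2 then (2,0) else if i = 2 then (3,1)
     else if i = 3 \<and> j = 1 then (2,1) else if i = 3 \<and> j = 0 then (4,0) else if i = 3 then (4,2)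
     else if i = 4 \<and> j = 0 then (3,0) else if i = 4 \<and> j = 2 then (3,2) else if i = 4 then (5,1)
     else if j = 1 then (4,1) else if j = 0 then (5,2) else (5,0))"

definition M0 :: "nat \<Rightarrow> (nat \<times> nat) set set" where
  "M0 p = {{x, pm x} | x. x \<in> CpC3_V p}"

lemma pm_props:
  assumes p: "even p" "p \<ge> 6" and x: "x \<in> CpC3_V p"
  shows "pm x \<in> CpC3_V p \<and> pm (pm x) = x \<and> {x, pm x} \<in> CpC3_E p"
proof -
  obtain i j where ij: "x = (i,j)" "i < p" "j < 3" using x by (cases x) auto
  have j3: "j = 0 \<or> j = 1 \<or> j = 2" using ij by auto
  show ?thesis
  proof (cases "i \<ge> 6")
    case True
    show ?thesis
    proof (cases "even i")
      case True
      hence "i + 1 < p" using ij p by (metis Suc_eq_plus1 Suc_lessI even_Suc)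
      thus ?thesis using True \<open>i \<ge> 6\<close> ij hor_E[of i p j] by (auto simp: pm_def)
    next
      case False
      hence "i - 1 + 1 = i" "i - 1 \<ge> 6" using \<open>i \<ge> 6\<close> by (auto elim: oddE)
      moreover have "even (i - 1)" using False \<open>i \<ge> 6\<close> by simp
      ultimately show ?thesis using False \<open>i \<ge> 6\<close> ij hor_E[of "i-1" p j]
        by (auto simp: pm_def insert_commute)
    qed
  next
    case False
    hence i6: "i = 0 \<or> i = 1 \<or> i = 2 \<or> i = 3 \<or> i = 4 \<or> i = 5" by auto
    have pl: "0 < p" "1 < p" "2 < p" "3 < p" "4 < p" "5 < p" "Suc 0 < p" using p by auto
    have V6: "\<And>i j. i < 6 \<Longrightarrow> j < 3 \<Longrightarrow> (i,j) \<in> CpC3_V p" using p by auto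
    have e1: "{(0,0),(1,0)} \<in> CpC3_E p" by (rule hor2_E) (use p in auto)
    have e2: "{(1,0),(0,0)} \<in> CpC3_E p" by (rule hor3_E) (use p in auto)
    have e3: "{(0,1),(1,1)} \<in> CpC3_E p" by (rule hor2_E) (use p in auto)
    have e4: "{(1,1),(0,1)} \<in> CpC3_E p" by (rule hor3_E) (use p in auto)
    have e5: "{(0,2),(1,2)} \<in> CpC3_E p" by (rule hor2_E) (use p in auto)
    have e6: "{(1,2),(0,2)} \<in> CpC3_E p" by (rule hor3_E) (use p in auto)
    have e7: "{(1,0),(2,0)} \<in> CpC3_E p" by (rule hor2_E) (use p in auto)
    have e8: "{(2,0),(1,0)} \<in> CpC3_E p" by (rule hor3_E) (use p in auto)
    have e9: "{(1,1),(2,1)} \<in> CpC3_E p" by (rule hor2_E) (use p in auto)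
    have e10: "{(2,1),(1,1)} \<in> CpC3_E p" by (rule hor3_E) (use p in auto)
    have e11: "{(1,2),(2,2)} \<in> CpC3_E p" by (rule hor2_E) (use p in auto)
    have e12: "{(2,2),(1,2)} \<in> CpC3_E p" by (rule hor3_E) (use p in auto)
    have e13: "{(2,0),(3,0)} \<in> CpC3_E p" by (rule hor2_E) (use p in auto)
    have e14: "{(3,0),(2,0)} \<in> CpC3_E p" by (rule hor3_E) (use p in auto)
    have e15: "{(2,1),(3,1)} \<in> CpC3_E p" by (rule hor2_E) (use p in auto)
    have e16: "{(3,1),(2,1)} \<in> CpC3_E p" by (rule hor3_E) (use p in auto)
    have e17: "{(2,2),(3,2)} \<in> CpC3_E p" by (rule hor2_E) (use p in auto)
    have e18: "{(3,2),(2,2)} \<in> CpC3_E p" by (rule hor3_E) (use p in auto)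
    have e19: "{(3,0),(4,0)} \<in> CpC3_E p" by (rule hor2_E) (use p in auto)
    have e20: "{(4,0),(3,0)} \<in> CpC3_E p" by (rule hor3_E) (use p in auto)
    have e21: "{(3,1),(4,1)} \<in> CpC3_E p" by (rule hor2_E) (use p in auto)
    have e22: "{(4,1),(3,1)} \<in> CpC3_E p" by (rule hor3_E) (use p in auto)
    have e23: "{(3,2),(4,2)} \<in> CpC3_E p" by (rule hor2_E) (use p in auto)
    have e24: "{(4,2),(3,2)} \<in> CpC3_E p" by (rule hor3_E) (use p in auto)
    have e25: "{(4,0),(5,0)} \<in> CpC3_E p" by (rule hor2_E) (use p in auto)
    have e26: "{(5,0),(4,0)} \<in> CpC3_E p" by (rule hor3_E) (use p in auto)
    have e27: "{(4,1),(5,1)} \<in> CpC3_E p" by (rule hor2_E) (use p in auto)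
    have e28: "{(5,1),(4,1)} \<in> CpC3_E p" by (rule hor3_E) (use p in auto)
    have e29: "{(4,2),(5,2)} \<in> CpC3_E p" by (rule hor2_E) (use p in auto)
    have e30: "{(5,2),(4,2)} \<in> CpC3_E p" by (rule hor3_E) (use p in auto)
    note hE = e1 e2 e3 e4 e5 e6 e7 e8 e9 e10 e11 e12 e13 e14 e15 e16 e17 e18 e19 e20 e21 e22 e23 e24 e25 e26 e27 e28 e29 e30
    have v1: "{(2,0),(2,2)} \<in> CpC3_E p" "{(2,2),(2,0)} \<in> CpC3_E p"
      "{(5,0),(5,2)} \<in> CpC3_E p" "{(5,2),(5,0)} \<in> CpC3_E p"
      using ver_E[of 2 p 2] ver_E[of 5 p 2] p by (simp_all add: insert_commute)
    from i6 j3 show ?thesis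
      by (elim disjE) (simp_all del: One_nat_def add: ij pm_def V6 hE v1 pl numeral_2_eq_2[symmetric] One_nat_def[symmetric])
  qed
qed

lemma M0_pm: "perfect_matching (CpC3_V p) (CpC3_E p) (M0 p)" if p: "even p" "p \<ge> 6"
  unfolding perfect_matching_def
proof
  show "M0 p \<subseteq> CpC3_E p" using pm_props[OF p] by (auto simp: M0_def)
  show "\<forall>v\<in>CpC3_V p. \<exists>!e. e \<in> M0 p \<and> v \<in> e"
  proof
    fix v assume v: "v \<in> CpC3_V p"
    show "\<exists>!e. e \<in> M0 p \<and> v \<in> e"
    proof
      show "{v, pm v} \<in> M0 p \<and> v \<in> {v, pm v}" unfolding M0_def using v by blast
    next
      fix e assume e: "e \<in> M0 p \<and> v \<in> e"
      then obtain x where x: "e = {x, pm x}" "x \<in> CpC3_V p" by (auto simp: M0_def)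
      show "e = {v, pm v}"
      proof (cases "v = x")
        case True thus ?thesis using x by simp
      next
        case False
        hence "v = pm x" using e x by auto
        hence "pm v = x" using pm_props[OF p x(2)] by simp
        thus ?thesis using x \<open>v = pm x\<close> by auto
      qed
    qed
  qed
qed

lemma nine_M0: "nine_edges \<subseteq> M0 p" if p: "even p" "p \<ge> 6"
proof -
  have m: "{x, pm x} \<in> M0 p" if "x \<in> CpC3_V p" for x unfolding M0_def using that by blast
  have "fst (a, b) < p" if "a < 6" for a b :: nat using that p by simp
  show ?thesis unfolding nine_edges_def va_def vb_def vc_def
    using m[of "(0,0)"] m[of "(0,1)"] m[of "(0,2)"] m[of "(2,0)"] m[of "(2,1)"]
      m[of "(3,0)"] m[of "(3,2)"] m[of "(4,1)"] m[of "(5,0)"] p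
    by (simp add: pm_def)
qed



lemma local_cases:
  fixes n :: "nat\<times>nat \<Rightarrow> nat\<times>nat" and q :: nat
  assumes q: "q \<noteq> 1" "q \<noteq> 2" "q \<noteq> 3" "q \<noteq> 4" "q \<noteq> 5"
    and o: "n (1,0) = (2,0) \<or> n (1,0) = (1,1) \<or> n (1,0) = (1,2)"
        "n (1,1) = (2,1) \<or> n (1,1) = (1,0) \<or> n (1,1) = (1,2)"
        "n (1,2) = (2,2) \<or> n (1,2) = (1,0) \<or> n (1,2) = (1,1)"
        "n (2,0) = (1,0) \<or> n (2,0) = (3,0) \<or> n (2,0) = (2,1)"
        "n (2,1) = (1,1) \<or> n (2,1) = (2,0) \<or> n (2,1) = (2,2)"
        "n (2,2) = (1,2) \<or> n (2,2) = (3,2) \<or> n (2,2) = (2,1)"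
        "n (3,0) = (2,0) \<or> n (3,0) = (3,1) \<or> n (3,0) = (3,2)"
        "n (3,1) = (4,1) \<or> n (3,1) = (3,0) \<or> n (3,1) = (3,2)"
        "n (3,2) = (2,2) \<or> n (3,2) = (3,0) \<or> n (3,2) = (3,1)"
        "n (4,0) = (5,0) \<or> n (4,0) = (4,1) \<or> n (4,0) = (4,2)"
        "n (4,1) = (3,1) \<or> n (4,1) = (4,0) \<or> n (4,1) = (4,2)"
        "n (4,2) = (5,2) \<or> n (4,2) = (4,0) \<or> n (4,2) = (4,1)"
        "n (5,0) = (4,0) \<or> n (5,0) = (q,0) \<or> n (5,0) = (5,1)"
        "n (5,1) = (q,1) \<or> n (5,1) = (5,0) \<or> n (5,1) = (5,2)"
        "n (5,2) = (4,2) \<or> n (5,2) = (q,2) \<or> n (5,2) = (5,1)"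
    and i: "n (n (1,0)) = (1,0)" "n (n (1,1)) = (1,1)" "n (n (1,2)) = (1,2)" "n (n (2,0)) = (2,0)" "n (n (2,1)) = (2,1)" "n (n (2,2)) = (2,2)" "n (n (3,0)) = (3,0)" "n (n (3,1)) = (3,1)" "n (n (3,2)) = (3,2)" "n (n (4,0)) = (4,0)" "n (n (4,1)) = (4,1)" "n (n (4,2)) = (4,2)" "n (n (5,0)) = (5,0)" "n (n (5,1)) = (5,1)" "n (n (5,2)) = (5,2)"
  shows "(n (3,0) = (3,2) \<or> (n (2,0) = (3,0) \<and> n (2,2) = (3,2))) \<and> (n (4,0) = (4,2) \<or> (n (4,0) = (5,0) \<and> n (4,2) = (5,2)))"
proof -
  show ?thesis using o(1)
  proof (elim disjE)
   assume h0_0: "n (1,0) = (2,0)"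
   show ?thesis using o(2)
   proof (elim disjE)
    assume h1_0: "n (1,1) = (2,1)"
    show ?thesis using o(3)
    proof (elim disjE)
     assume h2_0: "n (1,2) = (2,2)"
     show ?thesis using o(7)
     proof (elim disjE)
      assume h3_0: "n (3,0) = (2,0)"
      show ?thesis using h0_0 h1_0 h2_0 h3_0 i q by simp
     next
      assume h3_1: "n (3,0) = (3,1)"
      show ?thesis using o(9)
      proof (elim disjE)
       assume h4_0: "n (3,2) = (2,2)"
       show ?thesis using h0_0 h1_0 h2_0 h3_1 h4_0 i q by simp
      next
       assume h4_1: "n (3,2) = (3,0)"
       show ?thesis using h0_0 h1_0 h2_0 h3_1 h4_1 i q by simp
      next
       assume h4_2: "n (3,2) = (3,1)"
       show ?thesis using h0_0 h1_0 h2_0 h3_1 h4_2 i q by simp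
      qed
     next
      assume h3_2: "n (3,0) = (3,2)"
      show ?thesis using o(8)
      proof (elim disjE)
       assume h4_0: "n (3,1) = (4,1)"
       show ?thesis using o(10)
       proof (elim disjE)
        assume h5_0: "n (4,0) = (5,0)"
        show ?thesis using o(12)
        proof (elim disjE)
         assume h6_0: "n (4,2) = (5,2)"
         show ?thesis using h0_0 h1_0 h2_0 h3_2 h4_0 h5_0 h6_0 i q by simp
        next
         assume h6_1: "n (4,2) = (4,0)"
         show ?thesis using h0_0 h1_0 h2_0 h3_2 h4_0 h5_0 h6_1 i q by simp
        next
         assume h6_2: "n (4,2) = (4,1)"
         show ?thesis using h0_0 h1_0 h2_0 h3_2 h4_0 h5_0 h6_2 i q by simp
        qed
       next
        assume h5_1: "n (4,0) = (4,1)"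
        show ?thesis using h0_0 h1_0 h2_0 h3_2 h4_0 h5_1 i q by simp
       next
        assume h5_2: "n (4,0) = (4,2)"
        show ?thesis using h0_0 h1_0 h2_0 h3_2 h4_0 h5_2 i q by simp
       qed
      next
       assume h4_1: "n (3,1) = (3,0)"
       show ?thesis using h0_0 h1_0 h2_0 h3_2 h4_1 i q by simp
      next
       assume h4_2: "n (3,1) = (3,2)"
       show ?thesis using h0_0 h1_0 h2_0 h3_2 h4_2 i q by simp
      qed
     qed
    next
     assume h2_1: "n (1,2) = (1,0)"
     show ?thesis using h0_0 h1_0 h2_1 i q by simp
    next
     assume h2_2: "n (1,2) = (1,1)"
     show ?thesis using h0_0 h1_0 h2_2 i q by simp
    qed
   next
    assume h1_1: "n (1,1) = (1,0)"
    show ?thesis using h0_0 h1_1 i q by simp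
   next
    assume h1_2: "n (1,1) = (1,2)"
    show ?thesis using o(5)
    proof (elim disjE)
     assume h2_0: "n (2,1) = (1,1)"
     show ?thesis using h0_0 h1_2 h2_0 i q by simp
    next
     assume h2_1: "n (2,1) = (2,0)"
     show ?thesis using h0_0 h1_2 h2_1 i q by simp
    next
     assume h2_2: "n (2,1) = (2,2)"
     show ?thesis using o(7)
     proof (elim disjE)
      assume h3_0: "n (3,0) = (2,0)"
      show ?thesis using h0_0 h1_2 h2_2 h3_0 i q by simp
     next
      assume h3_1: "n (3,0) = (3,1)"
      show ?thesis using o(9)
      proof (elim disjE)
       assume h4_0: "n (3,2) = (2,2)"
       show ?thesis using h0_0 h1_2 h2_2 h3_1 h4_0 i q by simp
      next
       assume h4_1: "n (3,2) = (3,0)"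
       show ?thesis using h0_0 h1_2 h2_2 h3_1 h4_1 i q by simp
      next
       assume h4_2: "n (3,2) = (3,1)"
       show ?thesis using h0_0 h1_2 h2_2 h3_1 h4_2 i q by simp
      qed
     next
      assume h3_2: "n (3,0) = (3,2)"
      show ?thesis using o(8)
      proof (elim disjE)
       assume h4_0: "n (3,1) = (4,1)"
       show ?thesis using o(10)
       proof (elim disjE)
        assume h5_0: "n (4,0) = (5,0)"
        show ?thesis using o(12)
        proof (elim disjE)
         assume h6_0: "n (4,2) = (5,2)"
         show ?thesis using h0_0 h1_2 h2_2 h3_2 h4_0 h5_0 h6_0 i q by simp
        next
         assume h6_1: "n (4,2) = (4,0)"
         show ?thesis using h0_0 h1_2 h2_2 h3_2 h4_0 h5_0 h6_1 i q by simp
        next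
         assume h6_2: "n (4,2) = (4,1)"
         show ?thesis using h0_0 h1_2 h2_2 h3_2 h4_0 h5_0 h6_2 i q by simp
        qed
       next
        assume h5_1: "n (4,0) = (4,1)"
        show ?thesis using h0_0 h1_2 h2_2 h3_2 h4_0 h5_1 i q by simp
       next
        assume h5_2: "n (4,0) = (4,2)"
        show ?thesis using h0_0 h1_2 h2_2 h3_2 h4_0 h5_2 i q by simp
       qed
      next
       assume h4_1: "n (3,1) = (3,0)"
       show ?thesis using h0_0 h1_2 h2_2 h3_2 h4_1 i q by simp
      next
       assume h4_2: "n (3,1) = (3,2)"
       show ?thesis using h0_0 h1_2 h2_2 h3_2 h4_2 i q by simp
      qed
     qed
    qed
   qed
  next
   assume h0_1: "n (1,0) = (1,1)"
   show ?thesis using o(3)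
   proof (elim disjE)
    assume h1_0: "n (1,2) = (2,2)"
    show ?thesis using o(5)
    proof (elim disjE)
     assume h2_0: "n (2,1) = (1,1)"
     show ?thesis using h0_1 h1_0 h2_0 i q by simp
    next
     assume h2_1: "n (2,1) = (2,0)"
     show ?thesis using o(7)
     proof (elim disjE)
      assume h3_0: "n (3,0) = (2,0)"
      show ?thesis using h0_1 h1_0 h2_1 h3_0 i q by simp
     next
      assume h3_1: "n (3,0) = (3,1)"
      show ?thesis using o(9)
      proof (elim disjE)
       assume h4_0: "n (3,2) = (2,2)"
       show ?thesis using h0_1 h1_0 h2_1 h3_1 h4_0 i q by simp
      next
       assume h4_1: "n (3,2) = (3,0)"
       show ?thesis using h0_1 h1_0 h2_1 h3_1 h4_1 i q by simp
      next
       assume h4_2: "n (3,2) = (3,1)"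
       show ?thesis using h0_1 h1_0 h2_1 h3_1 h4_2 i q by simp
      qed
     next
      assume h3_2: "n (3,0) = (3,2)"
      show ?thesis using o(8)
      proof (elim disjE)
       assume h4_0: "n (3,1) = (4,1)"
       show ?thesis using o(10)
       proof (elim disjE)
        assume h5_0: "n (4,0) = (5,0)"
        show ?thesis using o(12)
        proof (elim disjE)
         assume h6_0: "n (4,2) = (5,2)"
         show ?thesis using h0_1 h1_0 h2_1 h3_2 h4_0 h5_0 h6_0 i q by simp
        next
         assume h6_1: "n (4,2) = (4,0)"
         show ?thesis using h0_1 h1_0 h2_1 h3_2 h4_0 h5_0 h6_1 i q by simp
        next
         assume h6_2: "n (4,2) = (4,1)"
         show ?thesis using h0_1 h1_0 h2_1 h3_2 h4_0 h5_0 h6_2 i q by simp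
        qed
       next
        assume h5_1: "n (4,0) = (4,1)"
        show ?thesis using h0_1 h1_0 h2_1 h3_2 h4_0 h5_1 i q by simp
       next
        assume h5_2: "n (4,0) = (4,2)"
        show ?thesis using h0_1 h1_0 h2_1 h3_2 h4_0 h5_2 i q by simp
       qed
      next
       assume h4_1: "n (3,1) = (3,0)"
       show ?thesis using h0_1 h1_0 h2_1 h3_2 h4_1 i q by simp
      next
       assume h4_2: "n (3,1) = (3,2)"
       show ?thesis using h0_1 h1_0 h2_1 h3_2 h4_2 i q by simp
      qed
     qed
    next
     assume h2_2: "n (2,1) = (2,2)"
     show ?thesis using h0_1 h1_0 h2_2 i q by simp
    qed
   next
    assume h1_1: "n (1,2) = (1,0)"
    show ?thesis using h0_1 h1_1 i q by simp
   next
    assume h1_2: "n (1,2) = (1,1)"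
    show ?thesis using h0_1 h1_2 i q by simp
   qed
  next
   assume h0_2: "n (1,0) = (1,2)"
   show ?thesis using o(2)
   proof (elim disjE)
    assume h1_0: "n (1,1) = (2,1)"
    show ?thesis using o(4)
    proof (elim disjE)
     assume h2_0: "n (2,0) = (1,0)"
     show ?thesis using h0_2 h1_0 h2_0 i q by simp
    next
     assume h2_1: "n (2,0) = (3,0)"
     show ?thesis using o(6)
     proof (elim disjE)
      assume h3_0: "n (2,2) = (1,2)"
      show ?thesis using h0_2 h1_0 h2_1 h3_0 i q by simp
     next
      assume h3_1: "n (2,2) = (3,2)"
      show ?thesis using o(8)
      proof (elim disjE)
       assume h4_0: "n (3,1) = (4,1)"
       show ?thesis using o(10)
       proof (elim disjE)
        assume h5_0: "n (4,0) = (5,0)"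
        show ?thesis using o(12)
        proof (elim disjE)
         assume h6_0: "n (4,2) = (5,2)"
         show ?thesis using h0_2 h1_0 h2_1 h3_1 h4_0 h5_0 h6_0 i q by simp
        next
         assume h6_1: "n (4,2) = (4,0)"
         show ?thesis using h0_2 h1_0 h2_1 h3_1 h4_0 h5_0 h6_1 i q by simp
        next
         assume h6_2: "n (4,2) = (4,1)"
         show ?thesis using h0_2 h1_0 h2_1 h3_1 h4_0 h5_0 h6_2 i q by simp
        qed
       next
        assume h5_1: "n (4,0) = (4,1)"
        show ?thesis using h0_2 h1_0 h2_1 h3_1 h4_0 h5_1 i q by simp
       next
        assume h5_2: "n (4,0) = (4,2)"
        show ?thesis using h0_2 h1_0 h2_1 h3_1 h4_0 h5_2 i q by simp
       qed
      next
       assume h4_1: "n (3,1) = (3,0)"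
       show ?thesis using h0_2 h1_0 h2_1 h3_1 h4_1 i q by simp
      next
       assume h4_2: "n (3,1) = (3,2)"
       show ?thesis using h0_2 h1_0 h2_1 h3_1 h4_2 i q by simp
      qed
     next
      assume h3_2: "n (2,2) = (2,1)"
      show ?thesis using h0_2 h1_0 h2_1 h3_2 i q by simp
     qed
    next
     assume h2_2: "n (2,0) = (2,1)"
     show ?thesis using h0_2 h1_0 h2_2 i q by simp
    qed
   next
    assume h1_1: "n (1,1) = (1,0)"
    show ?thesis using h0_2 h1_1 i q by simp
   next
    assume h1_2: "n (1,1) = (1,2)"
    show ?thesis using h0_2 h1_2 i q by simp
   qed
  qed
qed

lemma close_set:
  assumes pM: "perfect_matching (CpC3_V p) (CpC3_E p) M" and pN: "perfect_matching (CpC3_V p) (CpC3_E p) N"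
    and H: "hamiltonian_cycle (CpC3_V p) (CpC3_E p) (M \<union> N)" and p: "p \<ge> 6"
    and S: "S \<subseteq> CpC3_V p" "finite S" "card S < 3 * p" "x0 \<in> S"
    and cl: "\<And>x. x \<in> S \<Longrightarrow> partner M x \<in> S \<and> partner N x \<in> S"
  shows False
proof -
  have p3: "p \<ge> 3" using p by simp
  have "\<not> CpC3_V p \<subseteq> S"
  proof
    assume "CpC3_V p \<subseteq> S"
    hence "card (CpC3_V p) \<le> card S" using S(2) by (rule card_mono[rotated])
    thus False using S(3) card_V by simp
  qed
  then obtain y0 where y0: "y0 \<in> CpC3_V p" "y0 \<notin> S" by blast
  show False
  proof (rule ham_closed[OF H S(1) S(4) y0])
    fix x e assume x: "x \<in> S" and e: "e \<in> M \<union> N" "x \<in> e"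
    have xV: "x \<in> CpC3_V p" using x S(1) by blast
    show "e \<subseteq> S"
    proof (cases "e \<in> M")
      case True thus ?thesis using partner_props(2)[OF pM p3 xV True e(2)] cl[OF x] x by auto
    next
      case False hence "e \<in> N" using e by blast
      thus ?thesis using partner_props(2)[OF pN p3 xV _ e(2)] cl[OF x] x by auto
    qed
  qed
qed

lemma no_ext:
  assumes p: "even p" "p \<ge> 6" and pM: "perfect_matching (CpC3_V p) (CpC3_E p) M"
    and nineM: "nine_edges \<subseteq> M"
  shows "\<not> extends_to_ham (CpC3_V p) (CpC3_E p) M"
proof
  assume "extends_to_ham (CpC3_V p) (CpC3_E p) M"
  then obtain N where pN: "perfect_matching (CpC3_V p) (CpC3_E p) N"
    and H: "hamiltonian_cycle (CpC3_V p) (CpC3_E p) (M \<union> N)"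
    unfolding extends_to_ham_def by blast
  have p3: "p \<ge> 3" using p by simp
  define m where "m = partner M"
  define n where "n = partner N"
  have V6: "\<And>x. fst x < 6 \<Longrightarrow> snd x < 3 \<Longrightarrow> x \<in> CpC3_V p" using p by auto
  have mE: "\<And>x y. fst x < 6 \<Longrightarrow> snd x < 3 \<Longrightarrow> {x,y} \<in> M \<Longrightarrow> m x = y"
    unfolding m_def using partner_eq[OF pM p3] V6 by blast
  have minv: "\<And>x. x \<in> CpC3_V p \<Longrightarrow> m (m x) = x" unfolding m_def using partner_inv[OF pM p3] by blast
  have ninv0: "\<And>x. x \<in> CpC3_V p \<Longrightarrow> n (n x) = x" unfolding n_def using partner_inv[OF pN p3] by blast
  have ninv: "\<And>x. fst x < 6 \<Longrightarrow> snd x < 3 \<Longrightarrow> n (n x) = x" using ninv0 V6 by blast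
  have closeS: "\<And>S x0. S \<subseteq> CpC3_V p \<Longrightarrow> finite S \<Longrightarrow> card S < 3 * p \<Longrightarrow> x0 \<in> S \<Longrightarrow>
      (\<And>x. x \<in> S \<Longrightarrow> m x \<in> S \<and> n x \<in> S) \<Longrightarrow> False"
    unfolding m_def n_def using close_set[OF pM pN H p(2)] by blast
  have djV: "\<And>x. x \<in> CpC3_V p \<Longrightarrow> n x \<noteq> m x"
  proof
    fix x assume xV: "x \<in> CpC3_V p" and eq: "n x = m x"
    have mV: "m x \<in> CpC3_V p" unfolding m_def using partner_props[OF pM p3 xV] by blast
    have "card {x, m x} \<le> 2" by (simp add: card_insert_le_m1)
    hence "card {x, m x} < 3 * p" using p by linarith
    moreover have "\<And>y. y \<in> {x, m x} \<Longrightarrow> m y \<in> {x, m x} \<and> n y \<in> {x, m x}"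
      using minv[OF xV] ninv0[OF xV] eq by auto
    ultimately show False using closeS[of "{x, m x}" x] xV mV by auto
  qed
  have dj: "\<And>x. fst x < 6 \<Longrightarrow> snd x < 3 \<Longrightarrow> n x \<noteq> m x" using djV V6 by blast
  have nb: "\<And>i j. 1 \<le> i \<Longrightarrow> i \<le> 5 \<Longrightarrow> j < 3 \<Longrightarrow>
     n (i,j) = (i-1,j) \<or> n (i,j) = ((i+1) mod p, j) \<or> n (i,j) = (i, (j+1) mod 3) \<or> n (i,j) = (i, (j+2) mod 3)"
  proof -
    fix i j :: nat assume ij: "1 \<le> i" "i \<le> 5" "j < 3"
    have xV: "(i,j) \<in> CpC3_V p" using ij p by auto
    have "{(i,j), n (i,j)} \<in> N" unfolding n_def using partner_props[OF pN p3 xV] by blast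
    hence "{(i,j), n (i,j)} \<in> CpC3_E p" using pN by (auto simp: perfect_matching_def)
    thus "n (i,j) = (i-1,j) \<or> n (i,j) = ((i+1) mod p, j) \<or> n (i,j) = (i, (j+1) mod 3) \<or> n (i,j) = (i, (j+2) mod 3)"
      using E_nb ij p by simp
  qed
  have mods: "(2::nat) mod p = 2" "(3::nat) mod p = 3" "(4::nat) mod p = 4" "(5::nat) mod p = 5"
    using p by auto
  have q6: "6 mod p \<noteq> 1" "6 mod p \<noteq> 2" "6 mod p \<noteq> 3" "6 mod p \<noteq> 4" "6 mod p \<noteq> 5"
  proof -
    have "6 mod p = 0 \<or> 6 mod p = 6" using p by (cases "p = 6") auto
    thus "6 mod p \<noteq> 1" "6 mod p \<noteq> 2" "6 mod p \<noteq> 3" "6 mod p \<noteq> 4" "6 mod p \<noteq> 5" by auto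
  qed
  have nm: "{(0,0),(1,0)} \<in> M" "{(0,1),(1,1)} \<in> M" "{(0,2),(1,2)} \<in> M" "{(2,0),(2,2)} \<in> M" "{(2,1),(3,1)} \<in> M" "{(3,0),(4,0)} \<in> M" "{(3,2),(4,2)} \<in> M" "{(4,1),(5,1)} \<in> M" "{(5,0),(5,2)} \<in> M" using nineM by (simp_all add: nine_edges_def va_def vb_def vc_def)
  have m10: "m (1,0) = (0,0)" using mE[of "(1,0)" "(0,0)"] nm(1) by (simp add: insert_commute)
  have m11: "m (1,1) = (0,1)" using mE[of "(1,1)" "(0,1)"] nm(2) by (simp add: insert_commute)
  have m12: "m (1,2) = (0,2)" using mE[of "(1,2)" "(0,2)"] nm(3) by (simp add: insert_commute)
  have m20: "m (2,0) = (2,2)" using mE[of "(2,0)" "(2,2)"] nm(4) by (simp add: insert_commute)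
  have m21: "m (2,1) = (3,1)" using mE[of "(2,1)" "(3,1)"] nm(5) by (simp add: insert_commute)
  have m22: "m (2,2) = (2,0)" using mE[of "(2,2)" "(2,0)"] nm(4) by (simp add: insert_commute)
  have m30: "m (3,0) = (4,0)" using mE[of "(3,0)" "(4,0)"] nm(6) by (simp add: insert_commute)
  have m31: "m (3,1) = (2,1)" using mE[of "(3,1)" "(2,1)"] nm(5) by (simp add: insert_commute)
  have m32: "m (3,2) = (4,2)" using mE[of "(3,2)" "(4,2)"] nm(7) by (simp add: insert_commute)
  have m40: "m (4,0) = (3,0)" using mE[of "(4,0)" "(3,0)"] nm(6) by (simp add: insert_commute)
  have m41: "m (4,1) = (5,1)" using mE[of "(4,1)" "(5,1)"] nm(8) by (simp add: insert_commute)
  have m42: "m (4,2) = (3,2)" using mE[of "(4,2)" "(3,2)"] nm(7) by (simp add: insert_commute)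
  have m50: "m (5,0) = (5,2)" using mE[of "(5,0)" "(5,2)"] nm(9) by (simp add: insert_commute)
  have m51: "m (5,1) = (4,1)" using mE[of "(5,1)" "(4,1)"] nm(8) by (simp add: insert_commute)
  have m52: "m (5,2) = (5,0)" using mE[of "(5,2)" "(5,0)"] nm(9) by (simp add: insert_commute)
  have o10: "n (1,0) = (2,0) \<or> n (1,0) = (1,1) \<or> n (1,0) = (1,2)" using nb[of 1 0] dj[of "(1,0)"] m10 mods by (simp del: One_nat_def add: mods numeral_2_eq_2[symmetric] One_nat_def[symmetric]; blast?)
  have o11: "n (1,1) = (2,1) \<or> n (1,1) = (1,0) \<or> n (1,1) = (1,2)" using nb[of 1 1] dj[of "(1,1)"] m11 mods by (simp del: One_nat_def add: mods numeral_2_eq_2[symmetric] One_nat_def[symmetric]; blast?)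
  have o12: "n (1,2) = (2,2) \<or> n (1,2) = (1,0) \<or> n (1,2) = (1,1)" using nb[of 1 2] dj[of "(1,2)"] m12 mods by (simp del: One_nat_def add: mods numeral_2_eq_2[symmetric] One_nat_def[symmetric]; blast?)
  have o20: "n (2,0) = (1,0) \<or> n (2,0) = (3,0) \<or> n (2,0) = (2,1)" using nb[of 2 0] dj[of "(2,0)"] m20 mods by (simp del: One_nat_def add: mods numeral_2_eq_2[symmetric] One_nat_def[symmetric]; blast?)
  have o21: "n (2,1) = (1,1) \<or> n (2,1) = (2,0) \<or> n (2,1) = (2,2)" using nb[of 2 1] dj[of "(2,1)"] m21 mods by (simp del: One_nat_def add: mods numeral_2_eq_2[symmetric] One_nat_def[symmetric]; blast?)
  have o22: "n (2,2) = (1,2) \<or> n (2,2) = (3,2) \<or> n (2,2) = (2,1)" using nb[of 2 2] dj[of "(2,2)"] m22 mods by (simp del: One_nat_def add: mods numeral_2_eq_2[symmetric] One_nat_def[symmetric]; blast?)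
  have o30: "n (3,0) = (2,0) \<or> n (3,0) = (3,1) \<or> n (3,0) = (3,2)" using nb[of 3 0] dj[of "(3,0)"] m30 mods by (simp del: One_nat_def add: mods numeral_2_eq_2[symmetric] One_nat_def[symmetric]; blast?)
  have o31: "n (3,1) = (4,1) \<or> n (3,1) = (3,0) \<or> n (3,1) = (3,2)" using nb[of 3 1] dj[of "(3,1)"] m31 mods by (simp del: One_nat_def add: mods numeral_2_eq_2[symmetric] One_nat_def[symmetric]; blast?)
  have o32: "n (3,2) = (2,2) \<or> n (3,2) = (3,0) \<or> n (3,2) = (3,1)" using nb[of 3 2] dj[of "(3,2)"] m32 mods by (simp del: One_nat_def add: mods numeral_2_eq_2[symmetric] One_nat_def[symmetric]; blast?)
  have o40: "n (4,0) = (5,0) \<or> n (4,0) = (4,1) \<or> n (4,0) = (4,2)" using nb[of 4 0] dj[of "(4,0)"] m40 mods by (simp del: One_nat_def add: mods numeral_2_eq_2[symmetric] One_nat_def[symmetric]; blast?)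
  have o41: "n (4,1) = (3,1) \<or> n (4,1) = (4,0) \<or> n (4,1) = (4,2)" using nb[of 4 1] dj[of "(4,1)"] m41 mods by (simp del: One_nat_def add: mods numeral_2_eq_2[symmetric] One_nat_def[symmetric]; blast?)
  have o42: "n (4,2) = (5,2) \<or> n (4,2) = (4,0) \<or> n (4,2) = (4,1)" using nb[of 4 2] dj[of "(4,2)"] m42 mods by (simp del: One_nat_def add: mods numeral_2_eq_2[symmetric] One_nat_def[symmetric]; blast?)
  have o50: "n (5,0) = (4,0) \<or> n (5,0) = (6 mod p,0) \<or> n (5,0) = (5,1)" using nb[of 5 0] dj[of "(5,0)"] m50 mods by (simp del: One_nat_def add: mods numeral_2_eq_2[symmetric] One_nat_def[symmetric]; blast?)
  have o51: "n (5,1) = (6 mod p,1) \<or> n (5,1) = (5,0) \<or> n (5,1) = (5,2)" using nb[of 5 1] dj[of "(5,1)"] m51 mods by (simp del: One_nat_def add: mods numeral_2_eq_2[symmetric] One_nat_def[symmetric]; blast?)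
  have o52: "n (5,2) = (4,2) \<or> n (5,2) = (6 mod p,2) \<or> n (5,2) = (5,1)" using nb[of 5 2] dj[of "(5,2)"] m52 mods by (simp del: One_nat_def add: mods numeral_2_eq_2[symmetric] One_nat_def[symmetric]; blast?)
  have iv: "n (n (1,0)) = (1,0)" "n (n (1,1)) = (1,1)" "n (n (1,2)) = (1,2)" "n (n (2,0)) = (2,0)" "n (n (2,1)) = (2,1)" "n (n (2,2)) = (2,2)" "n (n (3,0)) = (3,0)" "n (n (3,1)) = (3,1)" "n (n (3,2)) = (3,2)" "n (n (4,0)) = (4,0)" "n (n (4,1)) = (4,1)" "n (n (4,2)) = (4,2)" "n (n (5,0)) = (5,0)" "n (n (5,1)) = (5,1)" "n (n (5,2)) = (5,2)" using ninv by auto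
  note L = local_cases[of "6 mod p" n, OF q6 o10 o11 o12 o20 o21 o22 o30 o31 o32 o40 o41 o42 o50 o51 o52 iv]

  have Vs: "\<And>S. S \<subseteq> {(i,j). i < 6 \<and> j < 3} \<Longrightarrow> S \<subseteq> CpC3_V p" using V6 by auto
  show False
  proof -
    from L have "(n (3,0) = (3,2) \<or> (n (2,0) = (3,0) \<and> n (2,2) = (3,2)))" by blast
    moreover from L have "(n (4,0) = (4,2) \<or> (n (4,0) = (5,0) \<and> n (4,2) = (5,2)))" by blast
    ultimately show False
    proof (elim disjE conjE)
      assume a: "n (3,0) = (3,2)" and b: "n (4,0) = (4,2)"
      let ?S = "{(3,0),(4,0),(3,2),(4,2)} :: (nat \<times> nat) set"
      show False
      proof (rule closeS[of ?S "(3,0)"])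
        show "?S \<subseteq> CpC3_V p" using p by auto
        show "card ?S < 3 * p" using p by simp
      next
        fix x assume "x \<in> ?S" thus "m x \<in> ?S \<and> n x \<in> ?S" using a b iv m30 m32 m40 m42 by auto
      qed auto
    next
      assume a: "n (3,0) = (3,2)" and b: "n (4,0) = (5,0)" "n (4,2) = (5,2)"
      let ?S = "{(3,0),(4,0),(5,0),(3,2),(4,2),(5,2)} :: (nat \<times> nat) set"
      show False
      proof (rule closeS[of ?S "(3,0)"])
        show "?S \<subseteq> CpC3_V p" using p by auto
        show "card ?S < 3 * p" using p by simp
      next
        fix x assume "x \<in> ?S" thus "m x \<in> ?S \<and> n x \<in> ?S" using a b iv m30 m32 m40 m42 m50 m52 by auto
      qed auto
    next
      assume a: "n (2,0) = (3,0)" "n (2,2) = (3,2)" and b: "n (4,0) = (4,2)"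
      let ?S = "{(2,0),(3,0),(4,0),(2,2),(3,2),(4,2)} :: (nat \<times> nat) set"
      show False
      proof (rule closeS[of ?S "(3,0)"])
        show "?S \<subseteq> CpC3_V p" using p by auto
        show "card ?S < 3 * p" using p by simp
      next
        fix x assume "x \<in> ?S" thus "m x \<in> ?S \<and> n x \<in> ?S" using a b iv m20 m22 m30 m32 m40 m42 by auto
      qed auto
    next
      assume a: "n (2,0) = (3,0)" "n (2,2) = (3,2)" and b: "n (4,0) = (5,0)" "n (4,2) = (5,2)"
      let ?S = "{(2,0),(3,0),(4,0),(5,0),(2,2),(3,2),(4,2),(5,2)} :: (nat \<times> nat) set"
      show False
      proof (rule closeS[of ?S "(3,0)"])
        show "?S \<subseteq> CpC3_V p" using p by auto
        show "card ?S < 3 * p" using p by simp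
      next
        fix x assume "x \<in> ?S" thus "m x \<in> ?S \<and> n x \<in> ?S" using a b iv m20 m22 m30 m32 m40 m42 m50 m52 by auto
      qed auto
    qed
  qed
qed

theorem mainTheorem3:
  fixes p :: nat
  assumes "even p" and "p \<ge> 6"
  shows "(\<exists>M. perfect_matching (CpC3_V p) (CpC3_E p) M \<and> nine_edges \<subseteq> M)
       \<and> (\<forall>M. perfect_matching (CpC3_V p) (CpC3_E p) M \<and> nine_edges \<subseteq> M
              \<longrightarrow> \<not> extends_to_ham (CpC3_V p) (CpC3_E p) M)
       \<and> \<not> PMH_property (CpC3_V p) (CpC3_E p)"
proof -
  have ex: "perfect_matching (CpC3_V p) (CpC3_E p) (M0 p) \<and> nine_edges \<subseteq> M0 p"
    using M0_pm[OF assms] nine_M0[OF assms] by blast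
  have ne: "\<forall>M. perfect_matching (CpC3_V p) (CpC3_E p) M \<and> nine_edges \<subseteq> M
              \<longrightarrow> \<not> extends_to_ham (CpC3_V p) (CpC3_E p) M"
    using no_ext[OF assms] by blast
  have "\<not> PMH_property (CpC3_V p) (CpC3_E p)"
    unfolding PMH_property_def using ex ne by blast
  thus ?thesis using ex ne by blast
qed


end
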